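(* Let $\Omega_1\subsetneq\Omega_2\subset\mathbb{C}$ and $Y\subsetneq\mathbb{C}$ be domains. Then $\mathscr{C}_{\Omega_2}^{Y,s}(w)\leq \mathscr{C}_{\Omega_1}^{Y,s}(w)$ for all $w\in\Omega_1$ and $s\in Y$.
   Context: $\mathbb{D}=\{z\in\mathbb{C}:|z|<1\}$. For domains $\Omega\subset\mathbb{C}$, $Y\subsetneq\mathbb{C}$, and points $w\in\Omega$, $s\in Y$, let $\mathcal{H}^s_w(\Omega,Y)$ be the set of holomorphic maps $h:\Omega\to Y$ with $h(w)=s$ and $h(z)\neq s$ for all $z\in\Omega\setminus\{w\}$. For a domain $Y\subsetneq\mathbb{C}$ and $v\in Y$, the Hurwitz density is $\eta_Y(v)=2/r_Y(v)$, where $r_Y(v)=\max\{h'(0): h:\mathbb{D}\to Y \text{ holomorphic},\ h(0)=v,\ h(z)\neq v \text{ for } z\in\mathbb{D}\setminus\{0\},\ h'(0)>0\}$. The Carathéodory density of the Hurwitz metric of $\Omega$ relative to $Y$ is $\mathscr{C}_{\Omega}^{Y,s}(w)=\sup\{\eta_Y(h(w))|h'(w)| : h\in\mathcal{H}^s_w(\Omega,Y)\}$, defined to be $0$ if $\mathcal{H}^s_w(\Omega,Y)=\emptyset$. *)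

theory Defs
  imports "HOL-Complex_Analysis.Complex_Analysis"
begin

definition domain :: "complex set \<Rightarrow> bool" where
  "domain S \<longleftrightarrow> open S \<and> connected S \<and> S \<noteq> {}"

definition hurwitz_maps :: "complex set \<Rightarrow> complex set \<Rightarrow> complex \<Rightarrow> complex \<Rightarrow> (complex \<Rightarrow> complex) set" where
  "hurwitz_maps \<Omega> Y w s =
     {h. h holomorphic_on \<Omega> \<and> h ` \<Omega> \<subseteq> Y \<and> h w = s \<and> (\<forall>z\<in>\<Omega> - {w}. h z \<noteq> s)}"

text \<open>r_Y(v) = max { h'(0) : h in H^v_0(D, Y), h'(0) > 0 } (taken as a supremum).\<close>
definition hurwitz_radius :: "complex set \<Rightarrow> complex \<Rightarrow> real" where
  "hurwitz_radius Y v =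
     Sup {Re (deriv h 0) | h. h \<in> hurwitz_maps (ball 0 1) Y 0 v \<and>
                              deriv h 0 \<in> \<real> \<and> Re (deriv h 0) > 0}"

definition hurwitz_density :: "complex set \<Rightarrow> complex \<Rightarrow> real" where
  "hurwitz_density Y v = 2 / hurwitz_radius Y v"

definition cara_hurwitz :: "complex set \<Rightarrow> complex set \<Rightarrow> complex \<Rightarrow> complex \<Rightarrow> real" where
  "cara_hurwitz \<Omega> Y s w =
     (if hurwitz_maps \<Omega> Y w s = {} then 0
      else Sup {hurwitz_density Y (h w) * cmod (deriv h w) | h. h \<in> hurwitz_maps \<Omega> Y w s})"

end

theory Submission
  imports Defs
begin

lemma key_bound:
  assumes "\<delta> > 0" "s \<noteq> a"
  shows "\<exists>B. \<forall>h. h holomorphic_on ball w \<delta> \<and> (\<forall>z\<in>ball w \<delta>. h z \<noteq> a) \<and> h w = s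
           \<and> (\<forall>z\<in>ball w \<delta> - {w}. h z \<noteq> s) \<longrightarrow> cmod (deriv h w) \<le> B"
proof -
  obtain R where Rpos: "\<And>z. 0 < R z" and LP: "\<And>f. f holomorphic_on cball 0 (R (f 0)) \<Longrightarrow>
      (\<And>z. norm z \<le> R (f 0) \<Longrightarrow> f z \<noteq> 0 \<and> f z \<noteq> 1) \<Longrightarrow> norm (deriv f 0) < 1"
    using Landau_Picard by metis
  define R0 where "R0 = R (1/2)"
  have R0: "R0 > 0" using Rpos by (simp add: R0_def)
  define \<rho> where "\<rho> = \<delta> / (2*R0)"
  have \<rho>: "\<rho> > 0" using R0 assms by (simp add: \<rho>_def)
  show ?thesis
  proof (intro exI allI impI)
    fix h assume H: "h holomorphic_on ball w \<delta> \<and> (\<forall>z\<in>ball w \<delta>. h z \<noteq> a) \<and> h w = s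
           \<and> (\<forall>z\<in>ball w \<delta> - {w}. h z \<noteq> s)"
    define p where "p z = (h z - a)/(s - a)" for z
    have sa: "s - a \<noteq> 0" using assms by simp
    have wb: "w \<in> ball w \<delta>" using assms by simp
    have ph: "p holomorphic_on ball w \<delta>" unfolding p_def using H
      by (intro holomorphic_intros) auto
    have pnz: "\<And>x. x \<in> ball w \<delta> \<Longrightarrow> p x \<noteq> 0" using H sa by (auto simp: p_def)
    have pw: "p w = 1" using H sa by (simp add: p_def)
    have p1: "\<And>z. z \<in> ball w \<delta> \<Longrightarrow> p z = 1 \<Longrightarrow> z = w"
    proof -
      fix z assume z: "z \<in> ball w \<delta>" "p z = 1"
      then have "h z = s" using sa by (simp add: p_def divide_eq_1_iff)
      then show "z = w" using H z by blast
    qed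
    obtain L where L: "L holomorphic_on ball w \<delta>" "\<And>x. x \<in> ball w \<delta> \<Longrightarrow> exp (L x) = p x"
      using holomorphic_logarithm_exists[of "ball w \<delta>" p w] ph pnz wb by auto
    define M where "M z = L z - L w" for z
    have eLw: "exp (L w) = 1" using L(2)[OF wb] pw by simp
    have eM: "\<And>z. z \<in> ball w \<delta> \<Longrightarrow> exp (M z) = p z"
      using L(2) eLw by (simp add: M_def exp_diff)
    have Mw: "M w = 0" by (simp add: M_def)
    have Momit: "M z \<noteq> 2*pi*\<i> \<and> M z \<noteq> -(2*pi*\<i>)" if z: "z \<in> ball w \<delta>" for z
    proof (intro conjI notI)
      assume "M z = 2*pi*\<i>"
      then have "p z = 1" using eM[OF z] by simp
      then have "z = w" using p1 z by blast
      then show False using Mw \<open>M z = 2*pi*\<i>\<close> by simp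
    next
      assume "M z = -(2*pi*\<i>)"
      then have "p z = 1" using eM[OF z] by (simp add: exp_minus)
      then have "z = w" using p1 z by blast
      then show False using Mw \<open>M z = -(2*pi*\<i>)\<close> by simp
    qed
    define F where "F z = (M (w + of_real \<rho> * z) + 2*pi*\<i>)/(4*pi*\<i>)" for z
    have F0: "F 0 = 1/2" by (simp add: F_def Mw field_simps)
    have inball: "w + of_real \<rho> * z \<in> ball w \<delta>" if "norm z \<le> R0" for z
    proof -
      have "norm (of_real \<rho> * z) = \<rho> * norm z" using \<rho> by (simp add: norm_mult)
      also have "\<dots> \<le> \<rho> * R0" using that \<rho> by (simp add: mult_left_mono)
      also have "\<dots> < \<delta>" using R0 assms by (simp add: \<rho>_def)
      finally show ?thesis by (simp add: dist_norm)
    qed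
    have Mh: "M holomorphic_on ball w \<delta>" unfolding M_def using L(1)
      by (intro holomorphic_intros) auto
    have Fh: "F holomorphic_on cball 0 R0"
    proof -
      have "(\<lambda>z. w + of_real \<rho> * z) holomorphic_on cball 0 R0" by (intro holomorphic_intros)
      moreover have "(\<lambda>z. w + of_real \<rho> * z) ` cball 0 R0 \<subseteq> ball w \<delta>" using inball by auto
      ultimately have "(M \<circ> (\<lambda>z. w + of_real \<rho> * z)) holomorphic_on cball 0 R0"
        using holomorphic_on_compose_gen Mh by blast
      then show ?thesis unfolding F_def o_def by (intro holomorphic_intros) auto
    qed
    have Fom: "F z \<noteq> 0 \<and> F z \<noteq> 1" if "norm z \<le> R0" for z
    proof -
      have m: "M (w + of_real \<rho> * z) \<noteq> 2*pi*\<i> \<and> M (w + of_real \<rho> * z) \<noteq> -(2*pi*\<i>)"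
        using Momit inball[OF that] by blast
      show ?thesis
      proof (intro conjI notI)
        assume "F z = 0"
        then have "M (w + of_real \<rho> * z) + 2*pi*\<i> = 0" by (simp add: F_def)
        then have "M (w + of_real \<rho> * z) = -(2*pi*\<i>)" by (simp add: add_eq_0_iff)
        then show False using m by blast
      next
        assume "F z = 1"
        then have "M (w + of_real \<rho> * z) + 2*pi*\<i> = 4*pi*\<i>" by (simp add: F_def divide_eq_1_iff)
        then have "M (w + of_real \<rho> * z) = 2*pi*\<i>" by (simp add: algebra_simps)
        then show False using m by blast
      qed
    qed
    have Fd: "cmod (deriv F 0) < 1"
      using LP[of F] Fh Fom unfolding F0 R0_def by auto
    define L' where "L' = deriv L w"
    have Ld: "(L has_field_derivative L') (at w)"
      unfolding L'_def using L(1) wb by (meson holomorphic_derivI open_ball)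
    have "(F has_field_derivative (L' * of_real \<rho>) / (4*pi*\<i>)) (at 0)"
    proof -
      have "((\<lambda>z. w + of_real \<rho> * z) has_field_derivative of_real \<rho>) (at 0)"
        by (auto intro!: derivative_eq_intros)
      moreover have "(L has_field_derivative L') (at (w + of_real \<rho> * 0))" using Ld by simp
      ultimately have "((\<lambda>z. L (w + of_real \<rho> * z)) has_field_derivative L' * of_real \<rho>) (at 0)"
        using DERIV_chain2[of L L' "\<lambda>z. w + of_real \<rho> * z" 0] by simp
      then show ?thesis unfolding F_def M_def
        by (auto intro!: derivative_eq_intros)
    qed
    then have dF: "deriv F 0 = (L' * of_real \<rho>) / (4*pi*\<i>)" by (rule DERIV_imp_deriv)
    have "((\<lambda>z. exp (L z)) has_field_derivative exp (L w) * L') (at w)"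
      using Ld by (auto intro!: derivative_eq_intros)
    then have e1: "((\<lambda>z. exp (L z)) has_field_derivative L') (at w)" using eLw by simp
    have "((\<lambda>z. a + (s - a) * exp (L z)) has_field_derivative 0 + (s - a) * L') (at w)"
      by (rule DERIV_add[OF DERIV_const DERIV_cmult[OF e1]])
    then have "((\<lambda>z. a + (s - a) * exp (L z)) has_field_derivative (s - a) * L') (at w)" by simp
    moreover have "\<And>x. x \<in> ball w \<delta> \<Longrightarrow> a + (s - a) * exp (L x) = h x"
      using L(2) sa by (simp add: p_def)
    ultimately have "(h has_field_derivative (s - a) * L') (at w)"
      using has_field_derivative_transform_within_open[of _ _ w "ball w \<delta>" h] wb by auto
    then have dh: "deriv h w = (s - a) * L'" by (rule DERIV_imp_deriv)
    have "L' = deriv F 0 * (4*pi*\<i>) / of_real \<rho>" using dF \<rho> by (simp add: field_simps)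
    then have "cmod (deriv h w) = cmod (s - a) * (cmod (deriv F 0) * (4*pi) / \<rho>)"
      using \<rho> by (simp add: dh norm_mult norm_divide)
    also have "\<dots> \<le> cmod (s - a) * (1 * (4*pi) / \<rho>)"
      using Fd \<rho> by (intro mult_left_mono divide_right_mono mult_right_mono) auto
    finally show "cmod (deriv h w) \<le> cmod (s - a) * (4*pi) / \<rho>" by simp
  qed
qed

lemma hurwitz_bound:
  assumes "open \<Omega>" "w \<in> \<Omega>" "Y \<noteq> UNIV" "s \<in> Y"
  shows "\<exists>B. \<forall>h\<in>hurwitz_maps \<Omega> Y w s. cmod (deriv h w) \<le> B"
proof -
  obtain a where a: "a \<notin> Y" using assms(3) by blast
  have sa: "s \<noteq> a" using a assms(4) by blast
  obtain \<delta> where d: "\<delta> > 0" "ball w \<delta> \<subseteq> \<Omega>" using assms(1,2) open_contains_ball by blast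
  obtain B where B: "\<And>h. h holomorphic_on ball w \<delta> \<and> (\<forall>z\<in>ball w \<delta>. h z \<noteq> a) \<and> h w = s
           \<and> (\<forall>z\<in>ball w \<delta> - {w}. h z \<noteq> s) \<Longrightarrow> cmod (deriv h w) \<le> B"
    using key_bound[OF d(1) sa, of w] by blast
  show ?thesis
  proof (intro exI ballI)
    fix h assume h: "h \<in> hurwitz_maps \<Omega> Y w s"
    show "cmod (deriv h w) \<le> B"
    proof (rule B, intro conjI)
      show "h holomorphic_on ball w \<delta>" using h d holomorphic_on_subset unfolding hurwitz_maps_def by blast
      show "\<forall>z\<in>ball w \<delta>. h z \<noteq> a" using h d a unfolding hurwitz_maps_def by blast
      show "h w = s" using h unfolding hurwitz_maps_def by blast
      show "\<forall>z\<in>ball w \<delta> - {w}. h z \<noteq> s" using h d unfolding hurwitz_maps_def by blast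
    qed
  qed
qed

lemma radius_nonneg:
  assumes "open Y" "Y \<noteq> UNIV" "v \<in> Y"
  shows "hurwitz_radius Y v \<ge> 0"
proof -
  let ?S = "{Re (deriv h 0) | h. h \<in> hurwitz_maps (ball 0 1) Y 0 v \<and>
                              deriv h 0 \<in> \<real> \<and> Re (deriv h 0) > 0}"
  obtain B where B: "\<forall>h\<in>hurwitz_maps (ball 0 1) Y 0 v. cmod (deriv h 0) \<le> B"
    using hurwitz_bound[of "ball 0 1" 0 Y v] assms by auto
  have bdd: "bdd_above ?S"
  proof (rule bdd_aboveI)
    fix x assume "x \<in> ?S"
    then obtain h where "x = Re (deriv h 0)" "h \<in> hurwitz_maps (ball 0 1) Y 0 v" by blast
    then show "x \<le> B" using B abs_Re_le_cmod[of "deriv h 0"] by force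
  qed
  obtain \<epsilon> where e: "\<epsilon> > 0" "ball v \<epsilon> \<subseteq> Y" using assms open_contains_ball by blast
  define g where "g z = v + of_real \<epsilon> * z" for z
  have dg: "deriv g 0 = of_real \<epsilon>"
    unfolding g_def by (rule DERIV_imp_deriv) (auto intro!: derivative_eq_intros)
  have "g \<in> hurwitz_maps (ball 0 1) Y 0 v"
    unfolding hurwitz_maps_def
  proof (intro CollectI conjI)
    show "g holomorphic_on ball 0 1" unfolding g_def by (intro holomorphic_intros)
    show "g ` ball 0 1 \<subseteq> Y"
    proof
      fix y assume "y \<in> g ` ball 0 1"
      then obtain z where z: "norm z < 1" "y = g z" by auto
      have "norm (of_real \<epsilon> * z) < \<epsilon>" using z e by (simp add: norm_mult)
      then have "y \<in> ball v \<epsilon>" using z by (simp add: g_def dist_norm)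
      then show "y \<in> Y" using e by blast
    qed
    show "g 0 = v" by (simp add: g_def)
    show "\<forall>z\<in>ball 0 1 - {0}. g z \<noteq> v" using e by (simp add: g_def)
  qed
  then have "\<epsilon> \<in> ?S" using dg e by force
  then have "\<epsilon> \<le> hurwitz_radius Y v" unfolding hurwitz_radius_def using bdd by (rule cSup_upper)
  then show ?thesis using e by simp
qed

theorem corollary3p13:
  fixes \<Omega>1 \<Omega>2 Y :: "complex set" and w s :: complex
  assumes "domain \<Omega>1" and "domain \<Omega>2" and "\<Omega>1 \<subset> \<Omega>2"
    and "domain Y" and "Y \<noteq> UNIV"
    and "w \<in> \<Omega>1" and "s \<in> Y"
  shows "cara_hurwitz \<Omega>2 Y s w \<le> cara_hurwitz \<Omega>1 Y s w"
proof -
  define c where "c = hurwitz_density Y s"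
  have c: "c \<ge> 0" unfolding c_def hurwitz_density_def
    using radius_nonneg[of Y s] assms unfolding domain_def by simp
  have sub: "hurwitz_maps \<Omega>2 Y w s \<subseteq> hurwitz_maps \<Omega>1 Y w s"
    using assms(3) holomorphic_on_subset unfolding hurwitz_maps_def by blast
  let ?A = "\<lambda>\<Omega>. {hurwitz_density Y (h w) * cmod (deriv h w) | h. h \<in> hurwitz_maps \<Omega> Y w s}"
  have A: "?A \<Omega> = (\<lambda>h. c * cmod (deriv h w)) ` hurwitz_maps \<Omega> Y w s" for \<Omega>
    unfolding c_def hurwitz_maps_def by auto
  obtain B where B: "\<forall>h\<in>hurwitz_maps \<Omega>1 Y w s. cmod (deriv h w) \<le> B"
    using hurwitz_bound[of \<Omega>1 w Y s] assms unfolding domain_def by auto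
  have bdd: "bdd_above (?A \<Omega>1)" unfolding A
  proof (rule bdd_aboveI)
    fix x assume "x \<in> (\<lambda>h. c * cmod (deriv h w)) ` hurwitz_maps \<Omega>1 Y w s"
    then obtain h where "x = c * cmod (deriv h w)" "h \<in> hurwitz_maps \<Omega>1 Y w s" by blast
    then show "x \<le> c * B" using B c by (simp add: mult_left_mono)
  qed
  have nn: "0 \<le> Sup (?A \<Omega>1)" if ne1: "hurwitz_maps \<Omega>1 Y w s \<noteq> {}"
  proof -
    obtain h where h: "h \<in> hurwitz_maps \<Omega>1 Y w s" using ne1 by blast
    have "c * cmod (deriv h w) \<in> ?A \<Omega>1" unfolding A using h by blast
    then have "c * cmod (deriv h w) \<le> Sup (?A \<Omega>1)" using bdd by (rule cSup_upper)
    moreover have "0 \<le> c * cmod (deriv h w)" using c by simp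
    ultimately show ?thesis by linarith
  qed
  show ?thesis
  proof (cases "hurwitz_maps \<Omega>2 Y w s = {}")
    case True
    then show ?thesis unfolding cara_hurwitz_def using nn by auto
  next
    case False
    then have F1: "hurwitz_maps \<Omega>1 Y w s \<noteq> {}" using sub by blast
    have ne: "?A \<Omega>2 \<noteq> {}" using False unfolding A by blast
    have "?A \<Omega>2 \<subseteq> ?A \<Omega>1" unfolding A using sub by blast
    then have "Sup (?A \<Omega>2) \<le> Sup (?A \<Omega>1)" using cSup_subset_mono[OF ne bdd] by blast
    then show ?thesis unfolding cara_hurwitz_def using False F1 by simp
  qed
qed

end
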